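(* Let $G$ be a finite quasiprimitive permutation group of O'Nan–Scott type $\mathrm{HA}$, $\mathrm{HS}$, $\mathrm{HC}$ or $\mathrm{TW}$, and let $M$ be a point stabilizer. Then $M$ is a perfect code of $G$.
   Context: A permutation group is quasiprimitive if every non-trivial normal subgroup is transitive; the types $\mathrm{HA},\mathrm{HS},\mathrm{HC},\mathrm{TW},\mathrm{SD},\mathrm{CD},\mathrm{AS},\mathrm{PA}$ of quasiprimitive groups are those of Praeger's O'Nan–Scott classification (1997). For a group $G$ with identity $e$ and an inverse-closed subset $S\subseteq G\setminus\{e\}$, the Cayley graph $\mathrm{Cay}(G,S)$ has vertex set $G$ and edges $\{g,sg\}$ for $s\in S$, $g\in G$. A perfect code in a graph is an independent set $C$ of vertices such that every vertex outside $C$ is adjacent to exactly one vertex of $C$. A subgroup $H$ of $G$ is a perfect code of $G$ if some Cayley graph of $G$ admits $H$ as a perfect code. *)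

theory Defs
  imports "HOL-Algebra.Algebra"
begin

definition perm_grp :: "'a set \<Rightarrow> ('a \<Rightarrow> 'a) set \<Rightarrow> ('a \<Rightarrow> 'a) monoid" where
  "perm_grp \<Omega> G = (BijGroup \<Omega>)\<lparr>carrier := G\<rparr>"

definition transitive_on :: "'a set \<Rightarrow> ('a \<Rightarrow> 'a) set \<Rightarrow> bool" where
  "transitive_on \<Omega> H \<longleftrightarrow> (\<forall>x\<in>\<Omega>. \<forall>y\<in>\<Omega>. \<exists>g\<in>H. g x = y)"

definition regular_on :: "'a set \<Rightarrow> ('a \<Rightarrow> 'a) set \<Rightarrow> bool" where
  "regular_on \<Omega> H \<longleftrightarrow> transitive_on \<Omega> H \<and>
     (\<forall>x\<in>\<Omega>. \<forall>g\<in>H. g x = x \<longrightarrow> g = (\<lambda>y\<in>\<Omega>. y))"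

definition stabilizer_of :: "'a set \<Rightarrow> ('a \<Rightarrow> 'a) set \<Rightarrow> 'a \<Rightarrow> ('a \<Rightarrow> 'a) set" where
  "stabilizer_of \<Omega> G \<alpha> = {g \<in> G. g \<alpha> = \<alpha>}"

definition quasiprimitive :: "'a set \<Rightarrow> ('a \<Rightarrow> 'a) set \<Rightarrow> bool" where
  "quasiprimitive \<Omega> G \<longleftrightarrow> transitive_on \<Omega> G \<and>
     (\<forall>N. N \<lhd> perm_grp \<Omega> G \<and> N \<noteq> {\<lambda>y\<in>\<Omega>. y} \<longrightarrow> transitive_on \<Omega> N)"

definition minimal_normal :: "'a set \<Rightarrow> ('a \<Rightarrow> 'a) set \<Rightarrow> ('a \<Rightarrow> 'a) set \<Rightarrow> bool" where
  "minimal_normal \<Omega> G N \<longleftrightarrow> N \<lhd> perm_grp \<Omega> G \<and> N \<noteq> {\<lambda>y\<in>\<Omega>. y} \<and>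
     (\<forall>K. K \<lhd> perm_grp \<Omega> G \<and> K \<subseteq> N \<longrightarrow> K = {\<lambda>y\<in>\<Omega>. y} \<or> K = N)"

definition nonabelian_power_k_ge2 :: "'a set \<Rightarrow> ('a \<Rightarrow> 'a) set \<Rightarrow> ('a \<Rightarrow> 'a) set \<Rightarrow> bool" where
  "nonabelian_power_k_ge2 \<Omega> G N \<longleftrightarrow>
     (\<exists>(T :: ('a \<Rightarrow> 'a) monoid) (k :: nat). simple_group T \<and> \<not> comm_group T \<and> k \<ge> 2 \<and>
        (perm_grp \<Omega> G)\<lparr>carrier := N\<rparr> \<cong> product_group {..<k} (\<lambda>_. T))"

definition nonabelian_simple_sub :: "'a set \<Rightarrow> ('a \<Rightarrow> 'a) set \<Rightarrow> ('a \<Rightarrow> 'a) set \<Rightarrow> bool" where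
  "nonabelian_simple_sub \<Omega> G N \<longleftrightarrow>
     simple_group ((perm_grp \<Omega> G)\<lparr>carrier := N\<rparr>) \<and> \<not> comm_group ((perm_grp \<Omega> G)\<lparr>carrier := N\<rparr>)"

definition type_HA :: "'a set \<Rightarrow> ('a \<Rightarrow> 'a) set \<Rightarrow> bool" where
  "type_HA \<Omega> G \<longleftrightarrow> (\<exists>N. minimal_normal \<Omega> G N \<and> (\<forall>K. minimal_normal \<Omega> G K \<longrightarrow> K = N) \<and>
      comm_group ((perm_grp \<Omega> G)\<lparr>carrier := N\<rparr>) \<and> regular_on \<Omega> N)"

definition type_HS :: "'a set \<Rightarrow> ('a \<Rightarrow> 'a) set \<Rightarrow> bool" where
  "type_HS \<Omega> G \<longleftrightarrow> (\<exists>N1 N2. N1 \<noteq> N2 \<and> minimal_normal \<Omega> G N1 \<and> minimal_normal \<Omega> G N2 \<and>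
      (\<forall>K. minimal_normal \<Omega> G K \<longrightarrow> K = N1 \<or> K = N2) \<and>
      nonabelian_simple_sub \<Omega> G N1 \<and> nonabelian_simple_sub \<Omega> G N2 \<and>
      (perm_grp \<Omega> G)\<lparr>carrier := N1\<rparr> \<cong> (perm_grp \<Omega> G)\<lparr>carrier := N2\<rparr> \<and>
      regular_on \<Omega> N1 \<and> regular_on \<Omega> N2)"

definition type_HC :: "'a set \<Rightarrow> ('a \<Rightarrow> 'a) set \<Rightarrow> bool" where
  "type_HC \<Omega> G \<longleftrightarrow> (\<exists>N1 N2. N1 \<noteq> N2 \<and> minimal_normal \<Omega> G N1 \<and> minimal_normal \<Omega> G N2 \<and>
      (\<forall>K. minimal_normal \<Omega> G K \<longrightarrow> K = N1 \<or> K = N2) \<and>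
      nonabelian_power_k_ge2 \<Omega> G N1 \<and> nonabelian_power_k_ge2 \<Omega> G N2 \<and>
      (perm_grp \<Omega> G)\<lparr>carrier := N1\<rparr> \<cong> (perm_grp \<Omega> G)\<lparr>carrier := N2\<rparr> \<and>
      regular_on \<Omega> N1 \<and> regular_on \<Omega> N2)"

definition type_TW :: "'a set \<Rightarrow> ('a \<Rightarrow> 'a) set \<Rightarrow> bool" where
  "type_TW \<Omega> G \<longleftrightarrow> (\<exists>N. minimal_normal \<Omega> G N \<and> (\<forall>K. minimal_normal \<Omega> G K \<longrightarrow> K = N) \<and>
      nonabelian_power_k_ge2 \<Omega> G N \<and> regular_on \<Omega> N)"

definition cayley_adj :: "('g, 'b) monoid_scheme \<Rightarrow> 'g set \<Rightarrow> 'g \<Rightarrow> 'g \<Rightarrow> bool" where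
  "cayley_adj G S x y \<longleftrightarrow> x \<in> carrier G \<and> y \<in> carrier G \<and> y \<otimes>\<^bsub>G\<^esub> inv\<^bsub>G\<^esub> x \<in> S"

definition connection_set :: "('g, 'b) monoid_scheme \<Rightarrow> 'g set \<Rightarrow> bool" where
  "connection_set G S \<longleftrightarrow> S \<subseteq> carrier G - {\<one>\<^bsub>G\<^esub>} \<and> (\<forall>s\<in>S. inv\<^bsub>G\<^esub> s \<in> S)"

definition perfect_code_in_cayley :: "('g, 'b) monoid_scheme \<Rightarrow> 'g set \<Rightarrow> 'g set \<Rightarrow> bool" where
  "perfect_code_in_cayley G S C \<longleftrightarrow> C \<subseteq> carrier G \<and>
     (\<forall>x\<in>C. \<forall>y\<in>C. \<not> cayley_adj G S x y) \<and>
     (\<forall>v \<in> carrier G - C. \<exists>!c. c \<in> C \<and> cayley_adj G S v c)"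

definition perfect_code_of_group :: "('g, 'b) monoid_scheme \<Rightarrow> 'g set \<Rightarrow> bool" where
  "perfect_code_of_group G H \<longleftrightarrow> subgroup H G \<and>
     (\<exists>S. connection_set G S \<and> perfect_code_in_cayley G S H)"

end

theory Submission
  imports Defs
begin

lemma (in group) complement_perfect_code:
  assumes M: "subgroup M G" and N: "N \<lhd> G"
    and NM: "\<And>g. g \<in> N \<Longrightarrow> g \<in> M \<Longrightarrow> g = \<one>"
    and fact: "\<And>v. v \<in> carrier G \<Longrightarrow> \<exists>n\<in>N. inv n \<otimes> v \<in> M"
  shows "perfect_code_of_group G M"
proof -
  interpret Ns: normal N G by (rule N)
  have Nc: "N \<subseteq> carrier G" by (rule Ns.subset)
  have Mc: "M \<subseteq> carrier G" using M subgroup.subset by blast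
  define S where "S = N - {\<one>}"
  have cs: "connection_set G S"
    unfolding connection_set_def S_def using Nc Ns.m_inv_closed by auto
  have indep: "\<forall>x\<in>M. \<forall>y\<in>M. \<not> cayley_adj G S x y"
  proof (intro ballI notI)
    fix x y assume x: "x \<in> M" and y: "y \<in> M" and a: "cayley_adj G S x y"
    have "y \<otimes> inv x \<in> M" using x y M by (intro subgroup.m_closed subgroup.m_inv_closed)
    moreover have "y \<otimes> inv x \<in> S" using a unfolding cayley_adj_def by simp
    ultimately show False using NM unfolding S_def by blast
  qed
  have uniq: "\<forall>v \<in> carrier G - M. \<exists>!c. c \<in> M \<and> cayley_adj G S v c"
  proof
    fix v assume v: "v \<in> carrier G - M"
    then have vc: "v \<in> carrier G" by blast
    obtain n where n: "n \<in> N" and c: "inv n \<otimes> v \<in> M" using fact vc by blast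
    have nc: "n \<in> carrier G" using n Nc by blast
    have eq1: "(inv n \<otimes> v) \<otimes> inv v = inv n" using nc vc by (simp add: m_assoc)
    have ne: "inv n \<noteq> \<one>"
    proof
      assume "inv n = \<one>"
      then have "n = \<one>" using nc by (metis inv_inv one_closed inv_one)
      then have "inv n \<otimes> v = v" using vc by simp
      then show False using c v by simp
    qed
    have adj: "cayley_adj G S v (inv n \<otimes> v)"
      unfolding cayley_adj_def S_def using vc nc eq1 ne n Ns.m_inv_closed by auto
    show "\<exists>!c. c \<in> M \<and> cayley_adj G S v c"
    proof (rule ex1I[of _ "inv n \<otimes> v"])
      show "inv n \<otimes> v \<in> M \<and> cayley_adj G S v (inv n \<otimes> v)" using c adj by blast
    next
      fix c' assume h: "c' \<in> M \<and> cayley_adj G S v c'"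
      then have c'M: "c' \<in> M" and s: "c' \<otimes> inv v \<in> N"
        unfolding cayley_adj_def S_def by auto
      have c'c: "c' \<in> carrier G" using c'M Mc by blast
      have "c' \<otimes> inv (inv n \<otimes> v) = (c' \<otimes> inv v) \<otimes> n"
        using c'c nc vc by (simp add: inv_mult_group m_assoc)
      also have "\<dots> \<in> N" using s n by (simp add: Ns.m_closed)
      finally have inN: "c' \<otimes> inv (inv n \<otimes> v) \<in> N" .
      have inM: "c' \<otimes> inv (inv n \<otimes> v) \<in> M"
        using c'M c M by (meson subgroup.m_closed subgroup.m_inv_closed)
      have "c' \<otimes> inv (inv n \<otimes> v) = \<one>" using NM inN inM by blast
      then show "c' = inv n \<otimes> v" using c'c nc vc
        by (metis inv_closed m_closed inv_equality inv_inv)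
    qed
  qed
  show ?thesis
    unfolding perfect_code_of_group_def perfect_code_in_cayley_def
    using M Mc cs indep uniq by blast
qed

lemma regular_normal_exists:
  assumes "type_HA \<Omega> G \<or> type_HS \<Omega> G \<or> type_HC \<Omega> G \<or> type_TW \<Omega> G"
  shows "\<exists>N. N \<lhd> perm_grp \<Omega> G \<and> regular_on \<Omega> N"
  using assms unfolding type_HA_def type_HS_def type_HC_def type_TW_def minimal_normal_def
  by blast

theorem lemma5p2:
  fixes \<Omega> :: "'a set" and G :: "('a \<Rightarrow> 'a) set" and \<alpha> :: 'a
  assumes "finite \<Omega>"
    and "subgroup G (BijGroup \<Omega>)"
    and "quasiprimitive \<Omega> G"
    and "type_HA \<Omega> G \<or> type_HS \<Omega> G \<or> type_HC \<Omega> G \<or> type_TW \<Omega> G"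
    and "\<alpha> \<in> \<Omega>"
  shows "perfect_code_of_group (perm_grp \<Omega> G) (stabilizer_of \<Omega> G \<alpha>)"
proof -
  let ?P = "perm_grp \<Omega> G"
  have grp: "group ?P" unfolding perm_grp_def
    using subgroup.subgroup_is_group[OF assms(2) group_BijGroup] .
  interpret P: group ?P by (rule grp)
  have car: "carrier ?P = G" by (simp add: perm_grp_def)
  have one: "\<one>\<^bsub>?P\<^esub> = (\<lambda>y\<in>\<Omega>. y)" by (simp add: perm_grp_def BijGroup_def)
  have GB: "G \<subseteq> Bij \<Omega>" using assms(2) subgroup.subset by (fastforce simp: BijGroup_def)
  have mul: "\<And>f g x. f \<in> G \<Longrightarrow> g \<in> G \<Longrightarrow> x \<in> \<Omega> \<Longrightarrow> (f \<otimes>\<^bsub>?P\<^esub> g) x = f (g x)"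
    using GB by (auto simp add: perm_grp_def BijGroup_def compose_def)
  have img: "\<And>g x. g \<in> G \<Longrightarrow> x \<in> \<Omega> \<Longrightarrow> g x \<in> \<Omega>"
    using GB Bij_imp_funcset by blast
  obtain N where N: "N \<lhd> ?P" and reg: "regular_on \<Omega> N"
    using regular_normal_exists[OF assms(4)] by blast
  interpret Ns: normal N ?P by (rule N)
  have NG: "N \<subseteq> G" using Ns.subset car by simp
  let ?M = "stabilizer_of \<Omega> G \<alpha>"
  have invfix: "\<And>g x. g \<in> G \<Longrightarrow> x \<in> \<Omega> \<Longrightarrow> (inv\<^bsub>?P\<^esub> g) (g x) = x"
  proof -
    fix g x assume g: "g \<in> G" and x: "x \<in> \<Omega>"
    have "(inv\<^bsub>?P\<^esub> g) (g x) = (inv\<^bsub>?P\<^esub> g \<otimes>\<^bsub>?P\<^esub> g) x"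
      using mul[of "inv\<^bsub>?P\<^esub> g" g x] x g car P.inv_closed by simp
    also have "\<dots> = x" using g car one x by simp
    finally show "(inv\<^bsub>?P\<^esub> g) (g x) = x" .
  qed
  have Msub: "subgroup ?M ?P"
  proof
    show "?M \<subseteq> carrier ?P" using car by (auto simp: stabilizer_of_def)
  next
    fix x y assume "x \<in> ?M" "y \<in> ?M"
    then show "x \<otimes>\<^bsub>?P\<^esub> y \<in> ?M"
      using mul assms(5) car P.m_closed unfolding stabilizer_of_def by auto
  next
    show "\<one>\<^bsub>?P\<^esub> \<in> ?M" using one assms(5) car P.one_closed
      unfolding stabilizer_of_def by auto
  next
    fix x assume x: "x \<in> ?M"
    then have "(inv\<^bsub>?P\<^esub> x) \<alpha> = \<alpha>" using invfix[of x \<alpha>] assms(5)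
      unfolding stabilizer_of_def by auto
    then show "inv\<^bsub>?P\<^esub> x \<in> ?M" using x car P.inv_closed
      unfolding stabilizer_of_def by auto
  qed
  show ?thesis
  proof (rule P.complement_perfect_code[OF Msub N])
    fix g assume "g \<in> N" "g \<in> ?M"
    then show "g = \<one>\<^bsub>?P\<^esub>" using reg one assms(5) unfolding regular_on_def stabilizer_of_def by auto
  next
    fix v assume v: "v \<in> carrier ?P"
    then have vG: "v \<in> G" using car by simp
    have "v \<alpha> \<in> \<Omega>" using img vG assms(5) by blast
    then obtain n where n: "n \<in> N" and nv: "n \<alpha> = v \<alpha>"
      using reg assms(5) unfolding regular_on_def transitive_on_def by blast
    have nG: "n \<in> G" using n NG by blast
    have "(inv\<^bsub>?P\<^esub> n \<otimes>\<^bsub>?P\<^esub> v) \<alpha> = \<alpha>"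
      using mul[of "inv\<^bsub>?P\<^esub> n" v \<alpha>] assms(5) invfix[OF nG assms(5)] nv nG vG car P.inv_closed by simp
    moreover have "inv\<^bsub>?P\<^esub> n \<otimes>\<^bsub>?P\<^esub> v \<in> G"
      using nG vG car P.m_closed P.inv_closed by auto
    ultimately show "\<exists>n\<in>N. inv\<^bsub>?P\<^esub> n \<otimes>\<^bsub>?P\<^esub> v \<in> ?M"
      using n unfolding stabilizer_of_def by blast
  qed
qed

end
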